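(* Let $S$ be a semiring satisfying the standing assumptions below, let $m>1$, $n>1$, and let $A,B\in M_{m\times n}(S)$ be two distinct matrices with $r(A)=r(B)=1$. (i) If $A$ has more nonzero entries than $B$, then there exists $C\in M_{m\times n}(S)$ such that $r(A+C)=1$ and $r(B+C)=2$. (ii) If $A$ and $B$ have the same number of nonzero entries, then there exists $C\in M_{m\times n}(S)$ such that either $r(A+C)=1$ and $r(B+C)=2$, or $r(A+C)=2$ and $r(B+C)=1$.
   Context: A semiring $(S,+,\cdot)$ here means: $(S,+)$ is a commutative monoid with zero $0$, $(S,\cdot)$ is a commutative monoid with identity $1$, multiplication distributes over addition, and $0$ is absorbing. Standing assumptions on $S$: $S$ is additively idempotent ($a+a=a$), multiplicatively cancellative (for every nonzero $a$, $ba=ca$ implies $b=c$), and additively unit irreducible (if $a+b$ is a unit then $a$ or $b$ is a unit). For $A\in M_{m\times n}(S)$, the rank $r(A)$ is the least positive integer $k$ such that $A=BC$ for some $B\in M_{m\times k}(S)$, $C\in M_{k\times n}(S)$; $r(0)=0$. *)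

theory Defs
  imports "Jordan_Normal_Form.Matrix"
begin

definition add_idempotent :: "'a::comm_semiring_1 itself \<Rightarrow> bool" where
  "add_idempotent _ \<longleftrightarrow> (\<forall>a::'a. a + a = a)"

definition mult_cancellative :: "'a::comm_semiring_1 itself \<Rightarrow> bool" where
  "mult_cancellative _ \<longleftrightarrow> (\<forall>a b c :: 'a. a \<noteq> 0 \<longrightarrow> b * a = c * a \<longrightarrow> b = c)"

definition add_unit_irreducible :: "'a::comm_semiring_1 itself \<Rightarrow> bool" where
  "add_unit_irreducible _ \<longleftrightarrow> (\<forall>a b :: 'a. (a + b) dvd 1 \<longrightarrow> a dvd 1 \<or> b dvd 1)"

definition mrank :: "'a::comm_semiring_1 mat \<Rightarrow> nat" where
  "mrank A = (if A = 0\<^sub>m (dim_row A) (dim_col A) then 0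
     else (LEAST k. 0 < k \<and> (\<exists>B C. B \<in> carrier_mat (dim_row A) k \<and>
                                      C \<in> carrier_mat k (dim_col A) \<and> A = B * C)))"

definition nnz :: "'a::zero mat \<Rightarrow> nat" where
  "nnz A = card {(i, j). i < dim_row A \<and> j < dim_col A \<and> A $$ (i, j) \<noteq> 0}"

end

theory Submission
  imports Defs
begin


lemma entry_prod1:
  assumes "P \<in> carrier_mat m 1" "Q \<in> carrier_mat 1 n" "i < m" "j < n"
  shows "(P * Q) $$ (i,j) = P $$ (i,0) * Q $$ (0,j)"
  using assms by (simp add: scalar_prod_def)

lemma mrank_one:
  fixes p q :: "nat \<Rightarrow> 'a::comm_semiring_1"
  assumes "i0 < m" "j0 < n" "p i0 * q j0 \<noteq> 0"
  shows "mrank (mat m n (\<lambda>(i,j). p i * q j)) = 1"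
proof -
  let ?M = "mat m n (\<lambda>(i,j). p i * q j)"
  have nz: "?M \<noteq> 0\<^sub>m m n"
  proof
    assume "?M = 0\<^sub>m m n"
    then have "?M $$ (i0,j0) = 0" using assms by simp
    then show False using assms by simp
  qed
  let ?P = "mat m 1 (\<lambda>(i,_). p i)" and ?Q = "mat 1 n (\<lambda>(_,j). q j)"
  have fac: "?M = ?P * ?Q"
    by (rule eq_matI) (auto simp: scalar_prod_def)
  have "(LEAST k. 0 < k \<and> (\<exists>B C. B \<in> carrier_mat m k \<and> C \<in> carrier_mat k n \<and> ?M = B * C)) = 1"
  proof (rule Least_equality)
    show "0 < (1::nat) \<and> (\<exists>B C. B \<in> carrier_mat m 1 \<and> C \<in> carrier_mat 1 n \<and> ?M = B * C)"
      using fac by (intro conjI exI[of _ ?P] exI[of _ ?Q]) auto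
  qed simp
  then show ?thesis using nz unfolding mrank_def by simp
qed

lemma rank1_minor:
  fixes M :: "'a::comm_semiring_1 mat"
  assumes "M \<in> carrier_mat m n" "mrank M = 1" "n > 0"
  shows "M \<noteq> 0\<^sub>m m n \<and> (\<exists>x y. \<forall>i<m. \<forall>j<n. M $$ (i,j) = x i * y j)"
proof -
  have dims: "dim_row M = m" "dim_col M = n" using assms by auto
  have nz: "M \<noteq> 0\<^sub>m m n" using assms(2) dims unfolding mrank_def by auto
  let ?P = "\<lambda>k. 0 < k \<and> (\<exists>B C. B \<in> carrier_mat m k \<and> C \<in> carrier_mat k n \<and> M = B * C)"
  have ex: "?P n" using assms by (intro conjI exI[of _ M] exI[of _ "1\<^sub>m n"]) auto
  have "(LEAST k. ?P k) = 1" using assms(2) nz dims unfolding mrank_def by simp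
  then have "?P 1" using LeastI[of ?P, OF ex] by simp
  then obtain P Q where PQ: "P \<in> carrier_mat m 1" "Q \<in> carrier_mat 1 n" "M = P * Q" by blast
  show ?thesis
    using nz PQ entry_prod1[OF PQ(1,2)]
    by (intro conjI exI[of _ "\<lambda>i. P $$ (i,0)"] exI[of _ "\<lambda>j. Q $$ (0,j)"]) auto
qed

lemma mrank_two:
  fixes p1 q1 p2 q2 :: "nat \<Rightarrow> 'a::comm_semiring_1" and m n :: nat
  defines "M \<equiv> mat m n (\<lambda>(i,j). p1 i * q1 j + p2 i * q2 j)"
  assumes "i < m" "i' < m" "j < n" "j' < n"
    "M $$ (i,j) * M $$ (i',j') \<noteq> M $$ (i,j') * M $$ (i',j)"
  shows "mrank M = 2"
proof -
  have dims: "dim_row M = m" "dim_col M = n" unfolding M_def by auto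
  have nz: "M \<noteq> 0\<^sub>m m n"
  proof
    assume "M = 0\<^sub>m m n"
    then show False using assms(2-6) by simp
  qed
  let ?P = "mat m 2 (\<lambda>(i,t). if t = 0 then p1 i else p2 i)"
  let ?Q = "mat 2 n (\<lambda>(t,j). if t = 0 then q1 j else q2 j)"
  have fac: "M = ?P * ?Q"
    unfolding M_def by (rule eq_matI) (auto simp: scalar_prod_def numeral_2_eq_2)
  have no1: "\<not> (\<exists>B C. B \<in> carrier_mat m 1 \<and> C \<in> carrier_mat 1 n \<and> M = B * C)"
  proof
    assume "\<exists>B C. B \<in> carrier_mat m 1 \<and> C \<in> carrier_mat 1 n \<and> M = B * C"
    then obtain P Q where PQ: "P \<in> carrier_mat m 1" "Q \<in> carrier_mat 1 n" "M = P * Q" by blast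
    have "M $$ (i,j) * M $$ (i',j') = M $$ (i,j') * M $$ (i',j)"
      using entry_prod1[OF PQ(1,2)] PQ(3) assms(2-5) by (simp add: ac_simps)
    then show False using assms(6) by simp
  qed
  have "(LEAST k. 0 < k \<and> (\<exists>B C. B \<in> carrier_mat m k \<and> C \<in> carrier_mat k n \<and> M = B * C)) = 2"
  proof (rule Least_equality)
    show "0 < (2::nat) \<and> (\<exists>B C. B \<in> carrier_mat m 2 \<and> C \<in> carrier_mat 2 n \<and> M = B * C)"
      using fac by (intro conjI exI[of _ ?P] exI[of _ ?Q]) auto
    fix y assume "0 < y \<and> (\<exists>B C. B \<in> carrier_mat m y \<and> C \<in> carrier_mat y n \<and> M = B * C)"
    then show "2 \<le> y" using no1 by (cases "y = 1") auto
  qed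
  then show ?thesis using nz dims unfolding mrank_def by simp
qed



definition goodC :: "nat \<Rightarrow> nat \<Rightarrow> (nat \<Rightarrow> nat \<Rightarrow> 'a::comm_semiring_1) \<Rightarrow> (nat \<Rightarrow> nat \<Rightarrow> 'a) \<Rightarrow> bool" where
"goodC m n a b \<longleftrightarrow> (\<exists>g. (\<exists>p q. (\<forall>i<m. \<forall>j<n. a i j + g i j = p i * q j) \<and> (\<exists>i<m. \<exists>j<n. p i * q j \<noteq> 0))
   \<and> (\<exists>p1 q1 p2 q2. \<forall>i<m. \<forall>j<n. b i j + g i j = p1 i * q1 j + p2 i * q2 j)
   \<and> (\<exists>i<m. \<exists>i'<m. \<exists>j<n. \<exists>j'<n. (b i j + g i j) * (b i' j' + g i' j') \<noteq> (b i j' + g i j') * (b i' j + g i' j)))"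

lemma goodI:
  assumes "\<forall>i<m. \<forall>j<n. a i j + g i j = p i * q j" "ia<m" "ja<n" "p ia * q ja \<noteq> 0"
    "\<forall>i<m. \<forall>j<n. b i j + g i j = r i * s j + t i * w j"
    "ib<m" "ic<m" "jb<n" "jc<n"
    "(b ib jb + g ib jb) * (b ic jc + g ic jc) \<noteq> (b ib jc + g ib jc) * (b ic jb + g ic jb)"
  shows "goodC m n a b"
  unfolding goodC_def using assms by blast

lemma good_transpose:
  assumes "goodC m n a b"
  shows "goodC n m (\<lambda>j i. a i j) (\<lambda>j i. b i j)"
proof -
  obtain g p q p1 q1 p2 q2 i0 j0 i i' j j' where
    h: "\<forall>i<m. \<forall>j<n. a i j + g i j = p i * q j" "i0<m" "j0<n" "p i0 * q j0 \<noteq> 0"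
    "\<forall>i<m. \<forall>j<n. b i j + g i j = p1 i * q1 j + p2 i * q2 j"
    "i<m" "i'<m" "j<n" "j'<n"
    "(b i j + g i j) * (b i' j' + g i' j') \<noteq> (b i j' + g i j') * (b i' j + g i' j)"
    using assms unfolding goodC_def by blast
  show ?thesis
    apply (rule goodI[where g="\<lambda>j i. g i j" and p=q and q=p and ia=j0 and ja=i0
          and r=q1 and s=p1 and t=q2 and w=p2 and ib=j and ic=j' and jb=i and jc=i'])
    using h by (auto simp: ac_simps)
qed

locale isr =
  fixes T :: "'a::comm_semiring_1 itself"
  assumes idem: "\<And>a::'a. a + a = a"
  and canc: "\<And>a b c::'a. a \<noteq> 0 \<Longrightarrow> b * a = c * a \<Longrightarrow> b = c"
begin

lemma zsf: "(a::'a) + b = 0 \<Longrightarrow> a = 0"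
proof -
  assume h: "a + b = 0"
  have "a = a + (a + b)" using h by simp
  also have "\<dots> = (a+a) + b" by (simp add: add.assoc)
  also have "\<dots> = 0" using idem h by simp
  finally show ?thesis .
qed

lemma nzd: "(a::'a) \<noteq> 0 \<Longrightarrow> b \<noteq> 0 \<Longrightarrow> a * b \<noteq> 0"
  using canc[of b a 0] by auto

lemma cancR: "(c::'a) \<noteq> 0 \<Longrightarrow> X \<noteq> Y \<Longrightarrow> X * c \<noteq> Y * c" using canc by blast
lemma cancL: "(c::'a) \<noteq> 0 \<Longrightarrow> X \<noteq> Y \<Longrightarrow> c * X \<noteq> c * Y" using canc by (metis mult.commute)

lemma CL_row:
  fixes x y u v :: "nat \<Rightarrow> 'a"
  assumes m: "m > 1" and n: "n > 1" and k: "k < m" and l: "l < n"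
  and kl: "x k * y l + u k * v l \<noteq> u k * v l"
  and Bnz: "i0 < m" "j0 < n" "u i0 * v j0 \<noteq> 0"
  and row: "\<forall>i<m. i \<noteq> k \<longrightarrow> u i = 0"
  shows "goodC m n (\<lambda>i j. x i * y j) (\<lambda>i j. u i * v j)"
proof -
  define k' where "k' = (if k = 0 then 1 else (0::nat))"
  have k': "k' < m" "k' \<noteq> k" using m by (auto simp: k'_def)
  have uk': "u k' = 0" using row k' by auto
  have i0: "i0 = k" using row Bnz by auto
  have uk: "u k \<noteq> 0" using Bnz i0 by auto
  have akl: "x k * y l \<noteq> 0" using kl by auto
  have yl: "y l \<noteq> 0" using akl by auto
  have xk: "x k \<noteq> 0" using akl by auto
  show ?thesis
  proof (cases "\<exists>j<n. v l * y j \<noteq> v j * y l")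
    case True
    then obtain j where j: "j < n" "v l * y j \<noteq> v j * y l" by blast
    show ?thesis
    proof (rule goodI[where g = "\<lambda>i j. if i = k' then y j else 0"
        and p = "\<lambda>i. x i + (if i = k' then 1 else 0)" and q = y and ia = k and ja = l
        and r = u and s = v and t = "\<lambda>i. if i = k' then 1 else 0" and w = y
        and ib = k and ic = k' and jb = l and jc = j])
      show "\<forall>i<m. \<forall>j<n. x i * y j + (if i = k' then y j else 0) = (x i + (if i = k' then 1 else 0)) * y j"
        by (auto simp: distrib_right)
      show "\<forall>i<m. \<forall>j<n. u i * v j + (if i = k' then y j else 0) = u i * v j + (if i = k' then 1 else 0) * y j"
        by auto
      have "u k * (v l * y j) \<noteq> u k * (v j * y l)" using cancL[OF uk j(2)] .
      then show "(u k * v l + (if k = k' then y l else 0)) * (u k' * v j + (if k' = k' then y j else 0)) \<noteq>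
          (u k * v j + (if k = k' then y j else 0)) * (u k' * v l + (if k' = k' then y l else 0))"
        using k' uk' by (simp add: ac_simps)
    qed (use k l akl k' j in auto)
  next
    case False
    then have prp: "\<forall>j<n. v l * y j = v j * y l" by auto
    show ?thesis
    proof (cases "\<exists>j<n. j \<noteq> l \<and> y j \<noteq> 0")
      case True
      then obtain j where j: "j < n" "j \<noteq> l" "y j \<noteq> 0" by blast
      show ?thesis
      proof (rule goodI[where g = "\<lambda>i j. (if i = k \<and> j = l then x k * y l else 0) + (if i = k' then y j else 0)"
          and p = "\<lambda>i. x i + (if i = k' then 1 else 0)" and q = y and ia = k and ja = l
          and r = "\<lambda>i. if i = k then 1 else 0" and s = "\<lambda>j. u k * v j + (if j = l then x k * y l else 0)"
          and t = "\<lambda>i. if i = k' then 1 else 0" and w = y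
          and ib = k and ic = k' and jb = l and jc = j])
        show "\<forall>i<m. \<forall>j<n. x i * y j + ((if i = k \<and> j = l then x k * y l else 0) + (if i = k' then y j else 0))
           = (x i + (if i = k' then 1 else 0)) * y j"
          using k' by (auto simp: distrib_right idem add.assoc[symmetric])
        show "\<forall>i<m. \<forall>j<n. u i * v j + ((if i = k \<and> j = l then x k * y l else 0) + (if i = k' then y j else 0))
           = (if i = k then 1 else 0) * (u k * v j + (if j = l then x k * y l else 0)) + (if i = k' then 1 else 0) * y j"
          using k' row by auto
        have ne: "u k * v l + x k * y l \<noteq> u k * v l" using kl by (simp add: ac_simps)
        have "(u k * v l + x k * y l) * y j \<noteq> u k * v l * y j" using cancR[OF j(3) ne] .
        moreover have "u k * v l * y j = u k * (v j * y l)" using prp j by (simp add: ac_simps)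
        ultimately show "(u k * v l + ((if k = k \<and> l = l then x k * y l else 0) + (if k = k' then y l else 0))) *
            (u k' * v j + ((if k' = k \<and> j = l then x k * y l else 0) + (if k' = k' then y j else 0))) \<noteq>
            (u k * v j + ((if k = k \<and> j = l then x k * y l else 0) + (if k = k' then y j else 0))) *
            (u k' * v l + ((if k' = k \<and> l = l then x k * y l else 0) + (if k' = k' then y l else 0)))"
          using k' uk' j by (simp add: ac_simps)
      qed (use k l akl k' j in auto)
    next
      case False
      then have y0: "\<forall>j<n. j \<noteq> l \<longrightarrow> y j = 0" by auto
      have v0: "\<forall>j<n. j \<noteq> l \<longrightarrow> v j = 0"
      proof (intro allI impI)
        fix j assume "j < n" "j \<noteq> l"
        then have "v j * y l = 0" using prp y0 by (metis mult_zero_right)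
        then show "v j = 0" using yl nzd by blast
      qed
      define l' where "l' = (if l = 0 then 1 else (0::nat))"
      have l': "l' < n" "l' \<noteq> l" using n by (auto simp: l'_def)
      have vl': "v l' = 0" using v0 l' by auto
      have bkl: "u k * v l \<noteq> 0" using Bnz i0 v0 by (metis mult_zero_right)
      show ?thesis
      proof (cases "\<exists>i<m. i \<noteq> k \<and> x i \<noteq> 0")
        case True
        then obtain i where i: "i < m" "i \<noteq> k" "x i \<noteq> 0" by blast
        have ui: "u i = 0" using row i by auto
        show ?thesis
        proof (rule goodI[where g = "\<lambda>i j. if j = l' then x i else 0"
            and p = x and q = "\<lambda>j. y j + (if j = l' then 1 else 0)" and ia = k and ja = l
            and r = u and s = v and t = x and w = "\<lambda>j. if j = l' then 1 else 0"
            and ib = k and ic = i and jb = l and jc = l'])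
          show "\<forall>i<m. \<forall>j<n. x i * y j + (if j = l' then x i else 0) = x i * (y j + (if j = l' then 1 else 0))"
            by (auto simp: distrib_left)
          show "\<forall>i<m. \<forall>j<n. u i * v j + (if j = l' then x i else 0) = u i * v j + x i * (if j = l' then 1 else 0)"
            by auto
          show "(u k * v l + (if l = l' then x k else 0)) * (u i * v l' + (if l' = l' then x i else 0)) \<noteq>
              (u k * v l' + (if l' = l' then x k else 0)) * (u i * v l + (if l = l' then x i else 0))"
            using l' ui vl' nzd[OF bkl i(3)] by simp
        qed (use k l akl l' i in auto)
      next
        case False
        then have x0: "\<forall>i<m. i \<noteq> k \<longrightarrow> x i = 0" by auto
        define a where "a = x k * y l"
        define b where "b = u k * v l"
        have ab: "b \<noteq> a" using kl idem unfolding a_def b_def by metis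
        have anz: "a \<noteq> 0" using akl a_def by simp
        have A0: "\<forall>i<m. \<forall>j<n. x i * y j = (if i = k \<and> j = l then a else 0)"
          using x0 y0 a_def by auto
        have B0: "\<forall>i<m. \<forall>j<n. u i * v j = (if i = k \<and> j = l then b else 0)"
          using row v0 b_def by auto
        let ?g = "\<lambda>i j. if i = k \<and> j = l then 0 else if (i = k \<or> i = k') \<and> (j = l \<or> j = l') then a else 0"
        show ?thesis
        proof (rule goodI[where g = ?g
            and p = "\<lambda>i. if i = k \<or> i = k' then a else 0" and q = "\<lambda>j. if j = l \<or> j = l' then 1 else 0"
            and ia = k and ja = l
            and r = "\<lambda>i. if i = k then 1 else 0" and s = "\<lambda>j. if j = l then b else if j = l' then a else 0"
            and t = "\<lambda>i. if i = k' then 1 else 0" and w = "\<lambda>j. if j = l \<or> j = l' then a else 0"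
            and ib = k and ic = k' and jb = l and jc = l'])
          show "\<forall>i<m. \<forall>j<n. x i * y j + ?g i j = (if i = k \<or> i = k' then a else 0) * (if j = l \<or> j = l' then 1 else 0)"
            using A0 by auto
          show "\<forall>i<m. \<forall>j<n. u i * v j + ?g i j = (if i = k then 1 else 0) * (if j = l then b else if j = l' then a else 0) + (if i = k' then 1 else 0) * (if j = l \<or> j = l' then a else 0)"
            using B0 k' l' by auto
          have "b * a \<noteq> a * a" using cancR[OF anz ab] .
          then show "(u k * v l + ?g k l) * (u k' * v l' + ?g k' l') \<noteq> (u k * v l' + ?g k l') * (u k' * v l + ?g k' l)"
            using B0 k' l' k l by simp
        qed (use k l anz k' l' in auto)
      qed
    qed
  qed
qed


lemma CL:
  fixes x y u v :: "nat \<Rightarrow> 'a"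
  assumes m: "m > 1" and n: "n > 1" and k: "k < m" and l: "l < n"
  and kl: "x k * y l + u k * v l \<noteq> u k * v l"
  and Bnz: "i0 < m" "j0 < n" "u i0 * v j0 \<noteq> 0"
  shows "goodC m n (\<lambda>i j. x i * y j) (\<lambda>i j. u i * v j)"
proof (cases "\<exists>k'<m. \<exists>l'<n. k' \<noteq> k \<and> l' \<noteq> l \<and> u k' * v l' \<noteq> 0")
  case True
  then obtain k' l' where kl': "k' < m" "l' < n" "k' \<noteq> k" "l' \<noteq> l" "u k' * v l' \<noteq> 0" by blast
  have akl: "x k * y l \<noteq> 0" using kl by auto
  show ?thesis
  proof (rule goodI[where g = "\<lambda>i j. if i = k \<and> j = l then x k * y l else 0"
      and p = x and q = y and ia = k and ja = l
      and r = u and s = v and t = "\<lambda>i. if i = k then x k * y l else 0" and w = "\<lambda>j. if j = l then 1 else 0"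
      and ib = k and ic = k' and jb = l and jc = l'])
    show "\<forall>i<m. \<forall>j<n. x i * y j + (if i = k \<and> j = l then x k * y l else 0) = x i * y j"
      by (auto simp: idem)
    show "\<forall>i<m. \<forall>j<n. u i * v j + (if i = k \<and> j = l then x k * y l else 0) =
        u i * v j + (if i = k then x k * y l else 0) * (if j = l then 1 else 0)" by auto
    have ne: "u k * v l + x k * y l \<noteq> u k * v l" using kl by (simp add: ac_simps)
    have "(u k * v l + x k * y l) * (u k' * v l') \<noteq> u k * v l * (u k' * v l')"
      using cancR[OF kl'(5) ne] .
    then show "(u k * v l + (if k = k \<and> l = l then x k * y l else 0)) *
        (u k' * v l' + (if k' = k \<and> l' = l then x k * y l else 0)) \<noteq>
        (u k * v l' + (if k = k \<and> l' = l then x k * y l else 0)) *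
        (u k' * v l + (if k' = k \<and> l = l then x k * y l else 0))"
      using kl' by (simp add: ac_simps)
  qed (use k l akl kl' in auto)
next
  case False
  note nc = False
  show ?thesis
  proof (cases "\<forall>i<m. i \<noteq> k \<longrightarrow> u i = 0")
    case True
    then show ?thesis using CL_row[where x=x and y=y and u=u and v=v, OF m n k l kl Bnz] by blast
  next
    case False
    then obtain i1 where i1: "i1 < m" "i1 \<noteq> k" "u i1 \<noteq> 0" by blast
    have col: "\<forall>j<n. j \<noteq> l \<longrightarrow> v j = 0"
    proof (intro allI impI)
      fix j assume "j < n" "j \<noteq> l"
      then have "u i1 * v j = 0" using nc i1 by blast
      then show "v j = 0" using i1(3) nzd by blast
    qed
    have kl2: "y l * x k + v l * u k \<noteq> v l * u k" using kl by (simp add: ac_simps)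
    have Bnz2: "v j0 * u i0 \<noteq> 0" using Bnz(3) by (simp add: ac_simps)
    have "goodC n m (\<lambda>i j. y i * x j) (\<lambda>i j. v i * u j)"
      using CL_row[where x=y and y=x and u=v and v=u, OF n m l k kl2 Bnz(2) Bnz(1) Bnz2 col] .
    from good_transpose[OF this] show ?thesis
      by (simp add: mult.commute)
  qed
qed

lemma CLmat:
  fixes A B :: "'a mat"
  assumes m: "m > 1" and n: "n > 1" and AC: "A \<in> carrier_mat m n" and BC: "B \<in> carrier_mat m n"
    and rA: "mrank A = 1" and rB: "mrank B = 1" and k: "k < m" and l: "l < n"
    and kl: "A $$ (k,l) + B $$ (k,l) \<noteq> B $$ (k,l)"
  shows "\<exists>C\<in>carrier_mat m n. mrank (A + C) = 1 \<and> mrank (B + C) = 2"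
proof -
  obtain x y where xy: "\<forall>i<m. \<forall>j<n. A $$ (i,j) = x i * y j" using rank1_minor[OF AC rA] n by auto
  obtain u v where uv: "\<forall>i<m. \<forall>j<n. B $$ (i,j) = u i * v j" and Bnz: "B \<noteq> 0\<^sub>m m n"
    using rank1_minor[OF BC rB] n by auto
  obtain i0 j0 where ij0: "i0 < m" "j0 < n" "B $$ (i0,j0) \<noteq> 0"
  proof -
    have "\<not> (\<forall>i<m. \<forall>j<n. B $$ (i,j) = 0)"
    proof
      assume "\<forall>i<m. \<forall>j<n. B $$ (i,j) = 0"
      then have "B = 0\<^sub>m m n" using BC by (intro eq_matI) auto
      then show False using Bnz by simp
    qed
    then show ?thesis using that by blast
  qed
  have "goodC m n (\<lambda>i j. x i * y j) (\<lambda>i j. u i * v j)"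
    apply (rule CL[where x=x and y=y and u=u and v=v, OF m n k l _ ij0(1,2)])
    using kl ij0 xy uv k l by auto
  then obtain g p q r s t w ib ic jb jc where
    h: "\<forall>i<m. \<forall>j<n. x i * y j + g i j = p i * q j" "\<exists>i<m. \<exists>j<n. p i * q j \<noteq> 0"
    "\<forall>i<m. \<forall>j<n. u i * v j + g i j = r i * s j + t i * w j"
    "ib<m" "ic<m" "jb<n" "jc<n"
    "(u ib * v jb + g ib jb) * (u ic * v jc + g ic jc) \<noteq> (u ib * v jc + g ib jc) * (u ic * v jb + g ic jb)"
    unfolding goodC_def by blast
  define C where "C = mat m n (\<lambda>(i,j). g i j)"
  have Cc: "C \<in> carrier_mat m n" unfolding C_def by simp
  have eA: "A + C = mat m n (\<lambda>(i,j). p i * q j)"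
    using AC xy h(1) unfolding C_def by (intro eq_matI) auto
  have eB: "B + C = mat m n (\<lambda>(i,j). r i * s j + t i * w j)"
    using BC uv h(3) unfolding C_def by (intro eq_matI) auto
  obtain i1 j1 where ij1: "i1 < m" "j1 < n" "p i1 * q j1 \<noteq> 0" using h(2) by blast
  have r1: "mrank (A + C) = 1" unfolding eA by (rule mrank_one[where p=p and q=q, OF ij1])
  have ent: "\<And>i j. i < m \<Longrightarrow> j < n \<Longrightarrow> mat m n (\<lambda>(i,j). r i * s j + t i * w j) $$ (i,j) = u i * v j + g i j"
    using h(3) by simp
  have r2: "mrank (B + C) = 2" unfolding eB
    apply (rule mrank_two[OF h(4,5,6,7)])
    using h(4-8) by (simp only: ent not_False_eq_True)
  show ?thesis using Cc r1 r2 by blast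
qed

end

theorem lemma4p1:
  fixes A B :: "'a::comm_semiring_1 mat" and m n :: nat
  assumes "add_idempotent TYPE('a)"
    and "mult_cancellative TYPE('a)"
    and "add_unit_irreducible TYPE('a)"
    and "m > 1" and "n > 1"
    and "A \<in> carrier_mat m n" and "B \<in> carrier_mat m n"
    and "A \<noteq> B"
    and "mrank A = 1" and "mrank B = 1"
  shows "(nnz A > nnz B \<longrightarrow>
            (\<exists>C \<in> carrier_mat m n. mrank (A + C) = 1 \<and> mrank (B + C) = 2))
       \<and> (nnz A = nnz B \<longrightarrow>
            (\<exists>C \<in> carrier_mat m n. (mrank (A + C) = 1 \<and> mrank (B + C) = 2) \<or>
                                   (mrank (A + C) = 2 \<and> mrank (B + C) = 1)))"
proof -
  interpret isr "TYPE('a)"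
  proof
    show "\<And>a::'a. a + a = a" using assms(1) unfolding add_idempotent_def by blast
    show "\<And>a b c::'a. a \<noteq> 0 \<Longrightarrow> b * a = c * a \<Longrightarrow> b = c"
      using assms(2) unfolding mult_cancellative_def by blast
  qed
  note AC = assms(6) and BC = assms(7)
  have dA: "dim_row A = m" "dim_col A = n" and dB: "dim_row B = m" "dim_col B = n"
    using AC BC by auto
  show ?thesis
  proof (intro conjI impI)
    assume gt: "nnz A > nnz B"
    have "\<exists>k<m. \<exists>l<n. A $$ (k,l) + B $$ (k,l) \<noteq> B $$ (k,l)"
    proof (rule ccontr)
      assume "\<not> ?thesis"
      then have le: "\<forall>k<m. \<forall>l<n. A $$ (k,l) + B $$ (k,l) = B $$ (k,l)" by blast
      have sub: "{(i, j). i < dim_row A \<and> j < dim_col A \<and> A $$ (i, j) \<noteq> 0}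
          \<subseteq> {(i, j). i < dim_row B \<and> j < dim_col B \<and> B $$ (i, j) \<noteq> 0}"
      proof (rule subsetI, clarify)
        fix i j assume h: "i < dim_row A" "j < dim_col A" "A $$ (i,j) \<noteq> 0"
        have "A $$ (i,j) + B $$ (i,j) = B $$ (i,j)" using le h dA by auto
        then show "i < dim_row B \<and> j < dim_col B \<and> B $$ (i,j) \<noteq> 0" using h dA dB by auto
      qed
      have fin: "finite {(i, j). i < dim_row B \<and> j < dim_col B \<and> B $$ (i, j) \<noteq> 0}"
        by (rule finite_subset[of _ "{..<dim_row B} \<times> {..<dim_col B}"]) auto
      have "nnz A \<le> nnz B" unfolding nnz_def by (rule card_mono[OF fin sub])
      then show False using gt by simp
    qed
    then obtain k l where kl: "k < m" "l < n" "A $$ (k,l) + B $$ (k,l) \<noteq> B $$ (k,l)" by blast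
    show "\<exists>C \<in> carrier_mat m n. mrank (A + C) = 1 \<and> mrank (B + C) = 2"
      by (rule CLmat[OF assms(4,5) AC BC assms(9,10) kl])
  next
    have "(\<exists>k<m. \<exists>l<n. A $$ (k,l) + B $$ (k,l) \<noteq> B $$ (k,l)) \<or>
          (\<exists>k<m. \<exists>l<n. B $$ (k,l) + A $$ (k,l) \<noteq> A $$ (k,l))"
    proof (rule ccontr)
      assume "\<not> ?thesis"
      then have "\<forall>k<m. \<forall>l<n. A $$ (k,l) = B $$ (k,l)" by (metis add.commute)
      then have "A = B" using AC BC by (intro eq_matI) auto
      then show False using assms(8) by simp
    qed
    then show "\<exists>C \<in> carrier_mat m n. (mrank (A + C) = 1 \<and> mrank (B + C) = 2) \<or>
                                   (mrank (A + C) = 2 \<and> mrank (B + C) = 1)"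
    proof
      assume "\<exists>k<m. \<exists>l<n. A $$ (k,l) + B $$ (k,l) \<noteq> B $$ (k,l)"
      then obtain k l where kl: "k < m" "l < n" "A $$ (k,l) + B $$ (k,l) \<noteq> B $$ (k,l)" by blast
      obtain C where "C \<in> carrier_mat m n" "mrank (A + C) = 1" "mrank (B + C) = 2"
        using CLmat[OF assms(4,5) AC BC assms(9,10) kl] by blast
      then show ?thesis by blast
    next
      assume "\<exists>k<m. \<exists>l<n. B $$ (k,l) + A $$ (k,l) \<noteq> A $$ (k,l)"
      then obtain k l where kl: "k < m" "l < n" "B $$ (k,l) + A $$ (k,l) \<noteq> A $$ (k,l)" by blast
      obtain C where "C \<in> carrier_mat m n" "mrank (B + C) = 1" "mrank (A + C) = 2"
        using CLmat[OF assms(4,5) BC AC assms(10,9) kl] by blast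
      then show ?thesis by blast
    qed
  qed
qed


end
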